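(* For every integer $t\ge3$ and every $\epsilon>0$ there exists a positive integer $n$ with $\omega(n)=t$ such that $\dfrac{i(X_n)}{n/p_t}<\epsilon$, where $p_t$ is the largest prime divisor of $n$.
   Context: $X_n$ is the graph on $\{0,\dots,n-1\}$ with $a,b$ adjacent iff $\gcd(a-b,n)=1$. $i(G)$ is the minimum size of a maximal independent set; $\omega(n)$ is the number of distinct prime factors of $n$. *)

theory Defs
  imports Complex_Main "HOL-Computational_Algebra.Primes"
begin

text \<open>The unitary Cayley graph X_n: vertex set {0..<n}, with a, b adjacent iff
  gcd(a - b, n) = 1 (differences taken in the integers). Loops are excluded
  (a = b); this only matters for n = 1.\<close>

definition X_adj :: "nat \<Rightarrow> nat \<Rightarrow> nat \<Rightarrow> bool" where
  "X_adj n a b \<longleftrightarrow> a < n \<and> b < n \<and> a \<noteq> b \<and> gcd (int a - int b) (int n) = 1"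

definition X_indep :: "nat \<Rightarrow> nat set \<Rightarrow> bool" where
  "X_indep n S \<longleftrightarrow> S \<subseteq> {0..<n} \<and> (\<forall>a\<in>S. \<forall>b\<in>S. \<not> X_adj n a b)"

definition X_maximal_indep :: "nat \<Rightarrow> nat set \<Rightarrow> bool" where
  "X_maximal_indep n S \<longleftrightarrow> X_indep n S \<and>
     (\<forall>T. X_indep n T \<and> S \<subseteq> T \<longrightarrow> T = S)"

definition i_X :: "nat \<Rightarrow> nat" where
  "i_X n = Min (card ` {S. X_maximal_indep n S})"

end

theory Submission imports Defs "HOL-Computational_Algebra.Squarefree" "HOL-Number_Theory.Cong" begin

lemma sqf_prod: assumes "squarefree (m::nat)" shows "m = \<Prod>(prime_factors m)"
proof -
  have m0: "m \<noteq> 0" using assms by (cases "m = 0") auto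
  have "(\<Prod>p \<in> prime_factors m. p ^ multiplicity p m) = m" using prod_prime_factors[OF m0] by simp
  moreover have "(\<Prod>p \<in> prime_factors m. p ^ multiplicity p m) = (\<Prod>p \<in> prime_factors m. p)"
    using assms m0 by (intro prod.cong) (auto simp: squarefree_factorial_semiring')
  ultimately show ?thesis by simp
qed

lemma count_bound:
  fixes N K :: nat
  assumes "\<And>n. n \<in> {1..N} \<Longrightarrow> square_part n \<le> K"
  shows "N \<le> 2 ^ card {p. prime p \<and> p \<le> N} * K"
proof -
  define f where "f n = (prime_factors (squarefree_part n), square_part n)" for n :: nat
  have inj: "inj_on f {1..N}"
  proof
    fix x y assume "x \<in> {1..N}" "y \<in> {1..N}" "f x = f y"
    then have 1: "prime_factors (squarefree_part x) = prime_factors (squarefree_part y)"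
      and 2: "square_part x = square_part y" by (auto simp: f_def)
    have "squarefree_part x = squarefree_part y"
      using sqf_prod[of "squarefree_part x"] sqf_prod[of "squarefree_part y"] 1 by simp
    with 2 show "x = y" by (rule squarefree_decomposition_unique)
  qed
  have sub: "f ` {1..N} \<subseteq> Pow {p. prime p \<and> p \<le> N} \<times> {1..K}"
  proof
    fix z assume "z \<in> f ` {1..N}"
    then obtain n where n: "n \<in> {1..N}" "z = f n" by auto
    have "squarefree_part n dvd n" using squarefree_decompose[of n] by (metis dvd_triv_left)
    have "\<forall>p \<in> prime_factors (squarefree_part n). p \<le> N"
    proof
      fix p assume "p \<in> prime_factors (squarefree_part n)"
      then have "p dvd squarefree_part n" by auto
      then have "p dvd n" using \<open>squarefree_part n dvd n\<close> by (rule dvd_trans)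
      then have "p \<le> n" using n(1) by (intro dvd_imp_le) auto
      then show "p \<le> N" using n(1) by simp
    qed
    moreover have "square_part n \<ge> 1" using n(1) square_part_0_iff[of n] by (cases "square_part n") auto
    ultimately show "z \<in> Pow {p. prime p \<and> p \<le> N} \<times> {1..K}"
      using n assms by (auto simp: f_def)
  qed
  have "N = card {1..N}" by simp
  also have "\<dots> \<le> card (Pow {p. prime p \<and> p \<le> N} \<times> {1..K})"
    using card_inj_on_le[OF inj sub] by simp
  also have "\<dots> = 2 ^ card {p. prime p \<and> p \<le> N} * K"
    by (simp add: card_cartesian_product card_Pow)
  finally show ?thesis .
qed

lemma log_floor_step:
  fixes p q :: nat
  assumes "p > 0" "16 * p < q"
  shows "nat \<lfloor>log 16 (real p)\<rfloor> < nat \<lfloor>log 16 (real q)\<rfloor>"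
proof -
  have "log 16 (real q) > log 16 (16 * real p)"
    using assms by (subst log_less_cancel_iff) (auto simp: of_nat_mult[symmetric] simp del: of_nat_mult)
  also have "log 16 (16 * real p) = 1 + log 16 (real p)"
    using assms by (simp add: log_mult)
  finally have "log 16 (real q) > 1 + log 16 (real p)" .
  moreover have "log 16 (real p) \<ge> 0" using assms by simp
  ultimately show ?thesis by linarith
qed

lemma prime_pair: "\<exists>b c. prime b \<and> prime c \<and> M < b \<and> b < c \<and> c \<le> 16 * (b::nat)"
proof (rule ccontr)
  assume "\<not> ?thesis"
  then have H: "\<And>p q. prime p \<Longrightarrow> prime q \<Longrightarrow> M < p \<Longrightarrow> p < q \<Longrightarrow> 16 * p < q"
    by (meson not_le)
  define m where "m = M + 3"
  define N :: nat where "N = 16 ^ m"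
  have sq: "square_part n \<le> 4 ^ m" if "n \<in> {1..N}" for n
  proof -
    have "square_part n ^ 2 dvd n" by simp
    then have "square_part n ^ 2 \<le> n" using that by (intro dvd_imp_le) auto
    also have "\<dots> \<le> (4 ^ m) ^ 2" using that by (simp add: N_def power2_eq_square flip: power_mult_distrib)
    finally show ?thesis by (rule power2_le_imp_le) simp
  qed
  define g where "g p = nat \<lfloor>log 16 (real p)\<rfloor>" for p :: nat
  define B where "B = {p. prime p \<and> M < p \<and> p \<le> N}"
  have mono: "g p < g q" if "p \<in> B" "q \<in> B" "p < q" for p q
    using H[of p q] that log_floor_step[of p q] by (auto simp: B_def g_def prime_gt_0_nat)
  have "inj_on g B"
  proof
    fix p q assume "p \<in> B" "q \<in> B" "g p = g q"
    then show "p = q" using mono[of p q] mono[of q p] by (cases p q rule: linorder_cases) auto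
  qed
  moreover have "g ` B \<subseteq> {0..m}"
  proof
    fix z assume "z \<in> g ` B"
    then obtain p where p: "p \<in> B" "z = g p" by auto
    have "p > 0" using p by (auto simp: B_def prime_gt_0_nat)
    have "real p \<le> 16 powr real m" using p by (simp add: B_def N_def powr_realpow)
    then have "log 16 (real p) \<le> real m" using \<open>p > 0\<close>
      by (subst log_le_iff) auto
    then have "\<lfloor>log 16 (real p)\<rfloor> \<le> \<lfloor>real m\<rfloor>" by (rule floor_mono)
    then show "z \<in> {0..m}" using p by (auto simp: g_def)
  qed
  ultimately have cB: "card B \<le> m + 1" using card_inj_on_le[of g B "{0..m}"] by simp
  have "{p. prime p \<and> p \<le> N} \<subseteq> {..M} \<union> B" by (auto simp: B_def)
  then have "card {p. prime p \<and> p \<le> N} \<le> card ({..M} \<union> B)"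
    by (intro card_mono) (auto simp: B_def)
  also have "\<dots> \<le> (M + 1) + (m + 1)" using card_Un_le[of "{..M}" B] cB by simp
  finally have cP: "card {p. prime p \<and> p \<le> N} \<le> M + m + 2" by simp
  have "N \<le> 2 ^ card {p. prime p \<and> p \<le> N} * 4 ^ m" using count_bound sq by blast
  also have "\<dots> \<le> 2 ^ (M + m + 2) * 4 ^ m" using cP by (intro mult_right_mono power_increasing) auto
  finally have ineq: "N \<le> 2 ^ (M + m + 2) * 4 ^ m" .
  have e1: "N = 2 ^ (4 * m)" unfolding N_def by (simp add: power_mult)
  have e2: "(4::nat) ^ m = 2 ^ (2 * m)" by (simp add: power_mult)
  have "(2::nat) ^ (4 * m) \<le> 2 ^ (M + m + 2 + 2 * m)" using ineq unfolding e1 e2 power_add by simp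
  then have "4 * m \<le> M + m + 2 + 2 * m" by (rule power_le_imp_le_exp[rotated]) simp
  then show False by (simp add: m_def)
qed

lemma crt_adj:
  fixes P :: "nat set"
  assumes fin: "finite P" and pr: "\<forall>p\<in>P. prime p" and uv: "u \<in> P" "v \<in> P" "u \<noteq> v"
    and nu: "\<not> u dvd y" and nv: "\<not> v dvd y"
  shows "\<exists>s < \<Prod>P. u dvd s \<and> v dvd s \<and> gcd (int y - int s) (int (\<Prod>P)) = 1"
proof -
  define n where "n = \<Prod>P"
  have n0: "n > 0" using fin pr unfolding n_def by (simp add: prime_gt_0_nat prod_pos)
  define w where "w p = (if p = u \<or> p = v then 0 else y + 1)" for p :: nat
  have cop: "\<forall>i\<in>P. \<forall>j\<in>P. i \<noteq> j \<longrightarrow> coprime (id i) (id j)"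
    using pr by (auto intro: primes_coprime)
  obtain x where x: "\<forall>i\<in>P. [x = w i] (mod id i)"
    using chinese_remainder_nat[OF fin cop, of w] by blast
  define s where "s = x mod n"
  have pdvd: "p dvd n" if "p \<in> P" for p using that fin unfolding n_def by (simp add: dvd_prod_eqI)
  have sx: "s mod p = w p mod p" if "p \<in> P" for p
    using x that pdvd[OF that] unfolding s_def cong_def by (simp add: mod_mod_cancel)
  have sl: "s < n" using n0 by (simp add: s_def)
  have udvd: "u dvd s" using sx[OF uv(1)] by (simp add: w_def mod_eq_0_iff_dvd)
  have vdvd: "v dvd s" using sx[OF uv(2)] by (simp add: w_def mod_eq_0_iff_dvd)
  have nd: "\<not> int p dvd (int y - int s)" if p: "p \<in> P" for p
  proof
    assume d: "int p dvd (int y - int s)"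
    show False
    proof (cases "p = u \<or> p = v")
      case True
      then have "p dvd s" using udvd vdvd by auto
      then have "int p dvd int s" by simp
      then have "int p dvd (int y - int s) + int s" using d by (intro dvd_add)
      then have "int p dvd int y" by simp
      then show False using True nu nv by auto
    next
      case False
      then have "s mod p = (y + 1) mod p" using sx[OF p] by (simp add: w_def)
      then have "[s = y + 1] (mod p)" by (simp add: cong_def)
      then have "[int s = int (y + 1)] (mod int p)" by (simp only: cong_int_iff)
      then have "[int s = int y + 1] (mod int p)" by (simp only: of_nat_add of_nat_1)
      moreover have "[int y = int s] (mod int p)" using d by (simp add: cong_iff_dvd_diff)
      ultimately have "[int y = int y + 1] (mod int p)" by (rule cong_trans[rotated])
      then have "int p dvd 1" by (simp add: cong_iff_dvd_diff)
      then show False using pr p by (auto simp: prime_gt_1_nat)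
    qed
  qed
  have "coprime (int y - int s) (\<Prod>p\<in>P. int p)"
  proof (rule prod_coprime_right)
    fix p assume p: "p \<in> P"
    have "prime (int p)" using pr p by auto
    then have "coprime (int p) (int y - int s)" using nd[OF p] by (rule prime_imp_coprime)
    then show "coprime (int y - int s) (int p)" by (simp add: coprime_commute)
  qed
  then have "coprime (int y - int s) (int n)" unfolding n_def by (simp only: of_nat_prod)
  then have g: "gcd (int y - int s) (int n) = 1" by (rule coprime_imp_gcd_eq_1)
  show ?thesis
  proof (intro exI[of _ s] conjI)
    show "s < \<Prod>P" using sl by (simp only: n_def)
    show "u dvd s" by (rule udvd)
    show "v dvd s" by (rule vdvd)
    show "gcd (int y - int s) (int (\<Prod>P)) = 1" using g by (simp only: n_def)
  qed
qed

lemma card_mult_below: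
  assumes "d dvd n" "d > 0"
  shows "card {x. x < n \<and> d dvd x} = n div d"
proof -
  have "{x. x < n \<and> d dvd x} = (\<lambda>k. d * k) ` {..<n div d}"
  proof (intro set_eqI iffI)
    fix x assume "x \<in> {x. x < n \<and> d dvd x}"
    then obtain k where "x = d * k" "d * k < n" by auto
    then have "d * k < d * (n div d)" using assms by simp
    then have "k < n div d" by (meson mult_less_cancel1)
    then show "x \<in> (\<lambda>k. d * k) ` {..<n div d}" using \<open>x = d * k\<close> by blast
  next
    fix x assume "x \<in> (\<lambda>k. d * k) ` {..<n div d}"
    then obtain k where "x = d * k" "k < n div d" by auto
    moreover have "d * (n div d) = n" using assms by simp
    moreover have "d * k < d * (n div d)" using assms \<open>k < n div d\<close> by (meson mult_less_cancel1)
    ultimately have "x < n" by simp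
    then show "x \<in> {x. x < n \<and> d dvd x}" using \<open>x = d * k\<close> by simp
  qed
  moreover have "inj_on (\<lambda>k. d * k) {..<n div d}" using assms by (auto simp: inj_on_def)
  ultimately show ?thesis by (simp add: card_image)
qed

lemma graph_bound:
  fixes P :: "nat set" and a b c :: nat
  assumes fin: "finite P" and pr: "\<forall>p\<in>P. prime p" and abc: "a \<in> P" "b \<in> P" "c \<in> P"
    and d: "a \<noteq> b" "a \<noteq> c" "b \<noteq> c"
  shows "i_X (\<Prod>P) \<le> \<Prod>P div (a*b) + \<Prod>P div (a*c) + \<Prod>P div (b*c)"
proof -
  define n where "n = \<Prod>P"
  have n0: "n > 0" using fin pr unfolding n_def by (simp add: prime_gt_0_nat prod_pos)
  have pd: "x * y dvd n" if "x \<in> P" "y \<in> P" "x \<noteq> y" for x y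
  proof -
    have "\<Prod>{x,y} dvd n" unfolding n_def using that fin by (intro prod_dvd_prod_subset) auto
    then show ?thesis using that by simp
  qed
  have pg: "p > 1" if "p \<in> P" for p using pr that prime_gt_1_nat by blast
  define S where "S = {x. x < n \<and> ((a dvd x \<and> b dvd x) \<or> (a dvd x \<and> c dvd x) \<or> (b dvd x \<and> c dvd x))}"
  have share: "\<not> X_adj n x y" if "x \<in> S" "y \<in> S" for x y
  proof
    assume adj: "X_adj n x y"
    have "(a dvd x \<and> a dvd y) \<or> (b dvd x \<and> b dvd y) \<or> (c dvd x \<and> c dvd y)"
      using that unfolding S_def by auto
    then obtain p where p: "p \<in> P" "p dvd x" "p dvd y"
      using abc by blast
    have "int p dvd gcd (int x - int y) (int n)"
      using p pd unfolding n_def by (auto simp: dvd_prod_eqI fin intro!: dvd_diff)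
    moreover have g1: "gcd (int x - int y) (int n) = 1" using adj by (simp add: X_adj_def)
    ultimately have "int p dvd 1" by metis
    then show False using pg[OF p(1)] by simp
  qed
  have indep: "X_indep n S" unfolding X_indep_def using share by (auto simp: S_def)
  have maxi: "T = S" if T: "X_indep n T" "S \<subseteq> T" for T
  proof (rule ccontr)
    assume "T \<noteq> S"
    then obtain y where y: "y \<in> T" "y \<notin> S" using T by blast
    have yn: "y < n" using T y by (auto simp: X_indep_def)
    have "\<exists>u v. u \<in> {a,b,c} \<and> v \<in> {a,b,c} \<and> u \<noteq> v \<and> \<not> u dvd y \<and> \<not> v dvd y"
      using y yn d unfolding S_def by blast
    then obtain u v where uv: "u \<in> {a,b,c}" "v \<in> {a,b,c}" "u \<noteq> v" "\<not> u dvd y" "\<not> v dvd y"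
      by blast
    obtain s where s: "s < n" "u dvd s" "v dvd s" "gcd (int y - int s) (int n) = 1"
    proof -
      have uP: "u \<in> P" "v \<in> P" using uv abc by auto
      have "\<exists>s < n. u dvd s \<and> v dvd s \<and> gcd (int y - int s) (int n) = 1"
        unfolding n_def by (rule crt_adj[OF fin pr uP uv(3-5)])
      then obtain s0 where h: "s0 < n \<and> u dvd s0 \<and> v dvd s0 \<and> gcd (int y - int s0) (int n) = 1"
        by (elim exE)
      show ?thesis using h by (intro that) auto
    qed
    have uu: "u = a \<or> u = b \<or> u = c" "v = a \<or> v = b \<or> v = c" using uv(1,2) by simp_all
    have sS: "s \<in> S" unfolding S_def using uu s(1-3) uv(3) by auto
    have "y \<noteq> s"
    proof
      assume "y = s"
      then have "int n = 1" using s(4) by simp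
      then have "n = 1" by simp
      moreover have "a dvd n" using pd[of a b] abc d by (meson dvd_mult_left)
      ultimately show False using pg[OF abc(1)] by simp
    qed
    then have "X_adj n y s" using yn s by (simp add: X_adj_def)
    moreover have "s \<in> T" using sS T by blast
    ultimately show False using T(1) y(1) by (auto simp: X_indep_def)
  qed
  have mS: "X_maximal_indep n S" using indep maxi by (auto simp: X_maximal_indep_def)
  have fin2: "finite (card ` {S. X_maximal_indep n S})"
  proof -
    have "{S. X_maximal_indep n S} \<subseteq> Pow {0..<n}" by (auto simp: X_maximal_indep_def X_indep_def)
    then show ?thesis by (meson finite_Pow_iff finite_atLeastLessThan finite_imageI finite_subset)
  qed
  have "i_X n \<le> card S" unfolding i_X_def using mS fin2 by (intro Min_le) auto
  also have "card S \<le> card ({x. x < n \<and> a*b dvd x} \<union> {x. x < n \<and> a*c dvd x} \<union> {x. x < n \<and> b*c dvd x})"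
  proof (rule card_mono)
    show "finite ({x. x < n \<and> a*b dvd x} \<union> {x. x < n \<and> a*c dvd x} \<union> {x. x < n \<and> b*c dvd x})" by auto
    show "S \<subseteq> {x. x < n \<and> a*b dvd x} \<union> {x. x < n \<and> a*c dvd x} \<union> {x. x < n \<and> b*c dvd x}"
    proof
      fix x assume "x \<in> S"
      moreover have "coprime a b" "coprime a c" "coprime b c" using pr abc d by (auto intro: primes_coprime)
      ultimately show "x \<in> {x. x < n \<and> a*b dvd x} \<union> {x. x < n \<and> a*c dvd x} \<union> {x. x < n \<and> b*c dvd x}"
        unfolding S_def by (auto intro: divides_mult)
    qed
  qed
  also have "\<dots> \<le> card {x. x < n \<and> a*b dvd x} + card {x. x < n \<and> a*c dvd x} + card {x. x < n \<and> b*c dvd x}"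
    by (meson card_Un_le add_right_mono le_trans)
  also have "\<dots> = n div (a*b) + n div (a*c) + n div (b*c)"
  proof -
    have a1: "a > 0" "b > 0" "c > 0" using pg[OF abc(1)] pg[OF abc(2)] pg[OF abc(3)] by simp_all
    have p0: "a * b > 0" "a * c > 0" "b * c > 0" using a1 by simp_all
    show ?thesis
      using card_mult_below[OF pd[OF abc(1,2) d(1)] p0(1)] card_mult_below[OF pd[OF abc(1,3) d(2)] p0(2)]
        card_mult_below[OF pd[OF abc(2,3) d(3)] p0(3)] by simp
  qed
  finally show ?thesis unfolding n_def .
qed

lemma pfP: assumes finP: "finite P" and prP: "\<forall>p\<in>P. prime (p::nat)"
  shows "prime_factors (\<Prod>P) = P"
proof (intro equalityI subsetI)
  fix x assume "x \<in> prime_factors (\<Prod>P)"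
  then have x: "prime x" "x dvd \<Prod>P" by (auto simp: in_prime_factors_iff)
  then obtain p where "p \<in> P" "x dvd p" using finP by (auto simp: prime_dvd_prod_iff)
  then show "x \<in> P" using prP x(1) by (metis primes_dvd_imp_eq)
next
  fix x assume x: "x \<in> P"
  have "x dvd \<Prod>P" using finP x by (rule dvd_prod_eqI) simp
  moreover have "\<Prod>P \<noteq> 0" using finP prP by (auto simp: prime_gt_0_nat)
  ultimately show "x \<in> prime_factors (\<Prod>P)" using prP x by (auto simp: in_prime_factors_iff)
qed

theorem corollary4p11:
  fixes t :: nat and \<epsilon> :: real
  assumes "t \<ge> 3" and "\<epsilon> > 0"
  shows "\<exists>n::nat. n > 0 \<and> card (prime_factors n) = t \<and>
           real (i_X n) / (real n / real (Max (prime_factors n))) < \<epsilon>"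
proof -
  obtain Q where Q: "Q \<subseteq> {p::nat. prime p}" "finite Q" "card Q = t - 3"
    using infinite_arbitrarily_large[OF primes_infinite] by blast
  define L where "L = max (Max (Q \<union> {0})) (nat \<lceil>18 / \<epsilon>\<rceil>)"
  obtain a where a: "prime a" "a > L" using bigger_prime by blast
  obtain b c where bc: "prime b" "prime c" "a < b" "b < c" "c \<le> 16 * b"
    using prime_pair[of a] by blast
  have Qa: "q < a" if "q \<in> Q" for q
  proof -
    have "q \<le> Max (Q \<union> {0})" using that Q by (intro Max_ge) auto
    then show ?thesis using a unfolding L_def by linarith
  qed
  have ae: "real a > 18 / \<epsilon>"
  proof -
    have "real a > real (nat \<lceil>18 / \<epsilon>\<rceil>)" using a unfolding L_def by simp
    moreover have "real (nat \<lceil>18 / \<epsilon>\<rceil>) \<ge> 18 / \<epsilon>" by linarith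
    ultimately show ?thesis by linarith
  qed
  define P where "P = Q \<union> {a, b, c}"
  have finP: "finite P" using Q by (simp add: P_def)
  have prP: "\<forall>p\<in>P. prime p" using Q a bc by (auto simp: P_def)
  have abcP: "a \<in> P" "b \<in> P" "c \<in> P" by (auto simp: P_def)
  have dabc: "a \<noteq> b" "a \<noteq> c" "b \<noteq> c" using bc by auto
  have nQ: "a \<notin> Q" "b \<notin> Q" "c \<notin> Q" using Qa[of a] Qa[of b] Qa[of c] bc by auto
  have cardP: "card P = t"
    using Q nQ dabc assms(1) by (simp add: P_def card_insert_if)
  define n where "n = \<Prod>P"
  have n0: "n > 0" using finP prP unfolding n_def by (simp add: prime_gt_0_nat prod_pos)
  have pf: "prime_factors n = P" unfolding n_def by (rule pfP[OF finP prP])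
  have maxP: "Max P = c"
  proof (rule Max_eqI[OF finP])
    fix y assume "y \<in> P"
    then have "y \<in> Q \<or> y = a \<or> y = b \<or> y = c" by (auto simp: P_def)
    then show "y \<le> c"
    proof (elim disjE)
      assume "y \<in> Q" then have "y < a" by (rule Qa)
      then show "y \<le> c" using bc by linarith
    qed (use bc in linarith)+
  qed (rule abcP(3))
  have pd: "x * y dvd n" if "x \<in> P" "y \<in> P" "x \<noteq> y" for x y
  proof -
    have "\<Prod>{x,y} dvd n" unfolding n_def using that finP by (intro prod_dvd_prod_subset) auto
    then show ?thesis using that by simp
  qed
  have ib: "i_X n \<le> n div (a*b) + n div (a*c) + n div (b*c)"
    unfolding n_def by (rule graph_bound[OF finP prP abcP dabc])
  have a0: "real a > 0" "real b > 0" "real c > 0" using a bc by (auto simp: prime_gt_0_nat)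
  define N where "N = real n"
  have N0: "N > 0" using n0 by (simp add: N_def)
  have "real (i_X n) \<le> N / (real a * real b) + N / (real a * real c) + N / (real b * real c)"
  proof -
    have "real (i_X n) \<le> real (n div (a*b)) + real (n div (a*c)) + real (n div (b*c))"
      using ib by linarith
    also have "\<dots> = N / (real a * real b) + N / (real a * real c) + N / (real b * real c)"
      using pd abcP dabc by (simp add: N_def real_of_nat_div)
    finally show ?thesis .
  qed
  then have "real (i_X n) / (N / real c) \<le>
      (N / (real a * real b) + N / (real a * real c) + N / (real b * real c)) / (N / real c)"
    using N0 a0 by (intro divide_right_mono) auto
  also have "\<dots> = real c / (real a * real b) + 1 / real b + 1 / real a"
    using N0 a0 by (simp add: field_simps)
  also have "\<dots> \<le> 16 / real a + 1 / real a + 1 / real a"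
  proof -
    have "real c / (real a * real b) \<le> 16 * real b / (real a * real b)"
      using bc a0 by (intro divide_right_mono) auto
    also have "\<dots> = 16 / real a" using a0 by simp
    finally have 1: "real c / (real a * real b) \<le> 16 / real a" .
    have 2: "1 / real b \<le> 1 / real a" using bc a0 by (intro divide_left_mono) auto
    show ?thesis using 1 2 by linarith
  qed
  also have "\<dots> = 18 / real a" by simp
  also have "\<dots> < \<epsilon>" using ae assms(2) a0 by (simp add: field_simps)
  finally have "real (i_X n) / (real n / real (Max (prime_factors n))) < \<epsilon>"
    using pf maxP by (simp add: N_def)
  then show ?thesis using n0 pf cardP by blast
qed

end
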